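(* Let $(X,\mathcal L,d)$ be a reduced Birkhoff--Beatley system whose vertical extension is drop complete and has finite Carathéodory number $\kappa$, let $D\subseteq X$ be a nonempty convex set, and let $f,g\colon D\to\mathbb R$. Suppose that for all $n\in\mathbb N$ with $1\le n\le\kappa$, all $x_0,x_1,\dots,x_n\in D$, all $x\in\operatorname{conv}\{x_1,\dots,x_n\}$ and all $t\in[0,1]$, $$f(c(t))\le(1-t)g(x_0)+t f(x),$$ where $c\colon[0,1]\to D$ is the standard parametrization of $[x_0,x]$. Then there exists a segment convex function $\phi\colon D\to\mathbb R$ with $f\le\phi\le g$ on $D$.
   Context: A reduced Birkhoff--Beatley system is a triple $(X,\mathcal L,d)$ where $X$ is a set with at least two elements, $\mathcal L$ is a family of subsets of $X$ (lines), and $d\colon X^2\to\mathbb R$ is a function, such that: (i) any two distinct points lie in a unique line of $\mathcal L$; (ii) for each $\ell\in\mathcal L$ there is a bijection $c\colon\mathbb R\to\ell$ (a ruler) with $d(c(t),c(s))=|t-s|$. For $a,b,t\in X$, write $(atb)$ if $a,t,b$ are three distinct collinear points with $d(a,b)=d(a,t)+d(t,b)$. The segment $[a,b]$ is $\{a\}$ if $a=b$, and $\{t\mid (atb)\}\cup\{a,b\}$ otherwise. If $a\ne b$, $\ell$ is the line through them and $c$ a ruler for $\ell$ with $c(\alpha)=a$, $c(\beta)=b$, the standard parametrization of $[a,b]$ is $\tilde c\colon[0,1]\to[a,b]$, $\tilde c(t)=c((\beta-\alpha)t+\alpha)$; if $a=b$ it is the constant map $a$. A set $K$ is convex if $[a,b]\subseteq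 K$ for all $a,b\in K$; $\operatorname{conv}(H)$ is the intersection of all convex sets containing $H$. For a nonempty convex $D$, a function $\phi\colon D\to\mathbb R$ is segment convex if $\phi(c(t))\le(1-t)\phi(x_0)+t\phi(x_1)$ for all $x_0,x_1\in D$, $t\in[0,1]$, where $c$ is the standard parametrization of $[x_0,x_1]$. The system is drop complete if for every convex $K\subseteq X$ and every $x_0\in X$, $\operatorname{conv}(\{x_0\}\cup K)=\bigcup\{[x_0,x]\mid x\in K\}$. The Carathéodory number of a system is the least $\kappa$ such that for every subset $H$ and every $x\in\operatorname{conv}(H)$ there is $F\subseteq H$ with $\operatorname{card}(F)\le\kappa$ and $x\in\operatorname{conv}(F)$ ($+\infty$ if no such $\kappa$ exists). The vertical extension is $(X^*,\mathcal L^*,d^* )$ with $X^*=X\times\mathbb R$, $d^*((x_0,y_0),(x_1,y_1))=\sqrt{d(x_0,x_1)^2+(y_0-y_1)^2}$, and lines: for $(x_0,y_0)\ne(x_1,y_1)$ with $x_0\ne x_1$, taking a ruler $c$ of the line through $x_0,x_1$ with $c(s_0)=x_0,c(s_1)=x_1$ and $a=((s_0-s_1)^2+(y_0-y_1)^2)^{-1/2}$, the line $\{(c(at(s_1-s_0)+s_0),\,at(y_1-y_0)+y_0)\mid t\in\mathbb R\}$; for $x_0=x_1$, the line $\{x_0\}\times\mathbb R$. (It is itself a reduced Birkhoff--Beatley system.) *)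

theory Defs
  imports Complex_Main
begin

definition ruler :: "('a \<Rightarrow> 'a \<Rightarrow> real) \<Rightarrow> 'a set \<Rightarrow> (real \<Rightarrow> 'a) \<Rightarrow> bool" where
  "ruler d l c \<longleftrightarrow> bij_betw c UNIV l \<and> (\<forall>t s. d (c t) (c s) = \<bar>t - s\<bar>)"

definition rBB :: "'a set \<Rightarrow> 'a set set \<Rightarrow> ('a \<Rightarrow> 'a \<Rightarrow> real) \<Rightarrow> bool" where
  "rBB X L d \<longleftrightarrow>
     (\<exists>a\<in>X. \<exists>b\<in>X. a \<noteq> b)
   \<and> (\<forall>l\<in>L. l \<subseteq> X)
   \<and> (\<forall>a\<in>X. \<forall>b\<in>X. a \<noteq> b \<longrightarrow> (\<exists>!l. l \<in> L \<and> a \<in> l \<and> b \<in> l))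
   \<and> (\<forall>l\<in>L. \<exists>c. ruler d l c)"

definition between :: "'a set set \<Rightarrow> ('a \<Rightarrow> 'a \<Rightarrow> real) \<Rightarrow> 'a \<Rightarrow> 'a \<Rightarrow> 'a \<Rightarrow> bool" where
  "between L d a t b \<longleftrightarrow> a \<noteq> t \<and> t \<noteq> b \<and> a \<noteq> b
     \<and> (\<exists>l\<in>L. a \<in> l \<and> t \<in> l \<and> b \<in> l) \<and> d a b = d a t + d t b"

definition segment :: "'a set set \<Rightarrow> ('a \<Rightarrow> 'a \<Rightarrow> real) \<Rightarrow> 'a \<Rightarrow> 'a \<Rightarrow> 'a set" where
  "segment L d a b = (if a = b then {a} else {t. between L d a t b} \<union> {a, b})"

definition bb_convex :: "'a set \<Rightarrow> 'a set set \<Rightarrow> ('a \<Rightarrow> 'a \<Rightarrow> real) \<Rightarrow> 'a set \<Rightarrow> bool" where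
  "bb_convex X L d K \<longleftrightarrow> K \<subseteq> X \<and> (\<forall>a\<in>K. \<forall>b\<in>K. segment L d a b \<subseteq> K)"

definition bb_conv :: "'a set \<Rightarrow> 'a set set \<Rightarrow> ('a \<Rightarrow> 'a \<Rightarrow> real) \<Rightarrow> 'a set \<Rightarrow> 'a set" where
  "bb_conv X L d H = \<Inter> {K. bb_convex X L d K \<and> H \<subseteq> K}"

text \<open>c is the standard parametrization of [x0,x1] (only its values on [0,1] matter).\<close>
definition std_param :: "'a set set \<Rightarrow> ('a \<Rightarrow> 'a \<Rightarrow> real) \<Rightarrow> 'a \<Rightarrow> 'a \<Rightarrow> (real \<Rightarrow> 'a) \<Rightarrow> bool" where
  "std_param L d x0 x1 c \<longleftrightarrow>
     (x0 = x1 \<longrightarrow> (\<forall>t\<in>{0..1}. c t = x0))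
   \<and> (x0 \<noteq> x1 \<longrightarrow> (\<exists>l r \<alpha> \<beta>. l \<in> L \<and> x0 \<in> l \<and> x1 \<in> l \<and> ruler d l r
          \<and> r \<alpha> = x0 \<and> r \<beta> = x1 \<and> (\<forall>t\<in>{0..1}. c t = r ((\<beta> - \<alpha>) * t + \<alpha>))))"

definition segment_convex :: "'a set set \<Rightarrow> ('a \<Rightarrow> 'a \<Rightarrow> real) \<Rightarrow> 'a set \<Rightarrow> ('a \<Rightarrow> real) \<Rightarrow> bool" where
  "segment_convex L d D \<phi> \<longleftrightarrow>
     (\<forall>x0\<in>D. \<forall>x1\<in>D. \<forall>c. std_param L d x0 x1 c \<longrightarrow>
        (\<forall>t\<in>{0..1}. \<phi> (c t) \<le> (1 - t) * \<phi> x0 + t * \<phi> x1))"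

definition drop_complete :: "'a set \<Rightarrow> 'a set set \<Rightarrow> ('a \<Rightarrow> 'a \<Rightarrow> real) \<Rightarrow> bool" where
  "drop_complete X L d \<longleftrightarrow>
     (\<forall>K x0. bb_convex X L d K \<and> K \<noteq> {} \<and> x0 \<in> X \<longrightarrow>
        bb_conv X L d (insert x0 K) = (\<Union>x\<in>K. segment L d x0 x))"

definition cara_prop :: "'a set \<Rightarrow> 'a set set \<Rightarrow> ('a \<Rightarrow> 'a \<Rightarrow> real) \<Rightarrow> nat \<Rightarrow> bool" where
  "cara_prop X L d k \<longleftrightarrow>
     (\<forall>H. H \<subseteq> X \<longrightarrow> (\<forall>x\<in>bb_conv X L d H.
        \<exists>F. F \<subseteq> H \<and> finite F \<and> card F \<le> k \<and> x \<in> bb_conv X L d F))"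

definition caratheodory_number :: "'a set \<Rightarrow> 'a set set \<Rightarrow> ('a \<Rightarrow> 'a \<Rightarrow> real) \<Rightarrow> nat \<Rightarrow> bool" where
  "caratheodory_number X L d \<kappa> \<longleftrightarrow> cara_prop X L d \<kappa> \<and> (\<forall>k. cara_prop X L d k \<longrightarrow> \<kappa> \<le> k)"

definition vext_X :: "'a set \<Rightarrow> ('a \<times> real) set" where
  "vext_X X = X \<times> UNIV"

definition vext_d :: "('a \<Rightarrow> 'a \<Rightarrow> real) \<Rightarrow> ('a \<times> real) \<Rightarrow> ('a \<times> real) \<Rightarrow> real" where
  "vext_d d p q = sqrt ((d (fst p) (fst q))\<^sup>2 + (snd p - snd q)\<^sup>2)"

definition vext_L :: "'a set \<Rightarrow> 'a set set \<Rightarrow> ('a \<Rightarrow> 'a \<Rightarrow> real) \<Rightarrow> ('a \<times> real) set set" where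
  "vext_L X L d = {S. \<exists>x0\<in>X. \<exists>y0. \<exists>x1\<in>X. \<exists>y1. (x0, y0) \<noteq> (x1, y1) \<and>
     ((x0 \<noteq> x1 \<and> (\<exists>l c s0 s1. l \<in> L \<and> x0 \<in> l \<and> x1 \<in> l \<and> ruler d l c \<and> c s0 = x0 \<and> c s1 = x1 \<and>
         S = (\<lambda>t. (c ((1 / sqrt ((s0 - s1)\<^sup>2 + (y0 - y1)\<^sup>2)) * t * (s1 - s0) + s0),
                    (1 / sqrt ((s0 - s1)\<^sup>2 + (y0 - y1)\<^sup>2)) * t * (y1 - y0) + y0)) ` UNIV))
      \<or> (x0 = x1 \<and> S = {x0} \<times> UNIV))}"

end

theory Submission
  imports Defs
begin


lemma ruler_in: "ruler d l r \<Longrightarrow> r s \<in> l"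
  unfolding ruler_def bij_betw_def by auto

lemma ruler_inj: "ruler d l r \<Longrightarrow> r s = r s' \<Longrightarrow> s = s'"
  unfolding ruler_def bij_betw_def inj_on_def by auto

lemma ruler_surj: "ruler d l r \<Longrightarrow> x \<in> l \<Longrightarrow> \<exists>s. r s = x"
  unfolding ruler_def bij_betw_def by auto

lemma ruler_dist: "ruler d l r \<Longrightarrow> d (r s) (r s') = \<bar>s - s'\<bar>"
  unfolding ruler_def by auto

lemma d_self:
  assumes sys: "rBB X L d" and u: "u \<in> X" shows "d u u = 0"
proof -
  obtain a b where ab: "a \<in> X" "b \<in> X" "a \<noteq> b" using sys unfolding rBB_def by blast
  obtain v where v: "v \<in> X" "v \<noteq> u" using ab by metis
  obtain l where l: "l \<in> L" "u \<in> l" "v \<in> l" using sys u v unfolding rBB_def by metis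
  obtain r where r: "ruler d l r" using sys l unfolding rBB_def by blast
  obtain s where "r s = u" using ruler_surj[OF r l(2)] by blast
  then show ?thesis using ruler_dist[OF r, of s s] by simp
qed

lemma std_param_ends:
  assumes "std_param L d x0 x1 c" shows "c 0 = x0" "c 1 = x1"
  using assms unfolding std_param_def by (cases "x0 = x1"; auto)+

lemma std_param_ex:
  assumes sys: "rBB X L d" and x: "x0 \<in> X" "x1 \<in> X"
  shows "\<exists>c. std_param L d x0 x1 c"
proof (cases "x0 = x1")
  case True then show ?thesis unfolding std_param_def by (rule_tac x="\<lambda>_. x0" in exI) auto
next
  case False
  obtain l where l: "l \<in> L" "x0 \<in> l" "x1 \<in> l" using sys x False unfolding rBB_def by metis
  obtain r where r: "ruler d l r" using sys l unfolding rBB_def by blast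
  obtain \<alpha> \<beta> where "r \<alpha> = x0" "r \<beta> = x1" using ruler_surj[OF r] l by metis
  then show ?thesis using False l r unfolding std_param_def
    by (rule_tac x="\<lambda>t. r ((\<beta> - \<alpha>) * t + \<alpha>)" in exI) blast
qed

lemma std_param_seg:
  assumes sp: "std_param L d x0 x1 c" and t: "t \<in> {0..1}"
  shows "c t \<in> segment L d x0 x1"
proof (cases "x0 = x1")
  case True then show ?thesis using sp t unfolding std_param_def segment_def by auto
next
  case False
  then obtain l r \<alpha> \<beta> where lr: "l \<in> L" "x0 \<in> l" "x1 \<in> l" "ruler d l r" "r \<alpha> = x0" "r \<beta> = x1"
    and c: "\<And>t. t\<in>{0..1} \<Longrightarrow> c t = r ((\<beta> - \<alpha>) * t + \<alpha>)" using sp unfolding std_param_def by blast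
  have ab: "\<alpha> \<noteq> \<beta>" using lr False by auto
  show ?thesis
  proof (cases "t = 0 \<or> t = 1")
    case True then show ?thesis using c t lr unfolding segment_def by auto
  next
    case F2: False
    have t01: "0 < t" "t < 1" using t F2 by auto
    let ?s = "(\<beta> - \<alpha>) * t + \<alpha>"
    have ne1: "?s \<noteq> \<alpha>" using ab t01 by simp
    have ne2: "?s \<noteq> \<beta>"
    proof
      assume "?s = \<beta>" then have "(\<beta> - \<alpha>) * (1 - t) = 0" by (simp add: algebra_simps)
      then show False using ab t01 by simp
    qed
    have "r ?s \<noteq> x0" "r ?s \<noteq> x1" using ne1 ne2 ruler_inj[OF lr(4)] lr by metis+
    moreover have "d x0 x1 = d x0 (r ?s) + d (r ?s) x1"
    proof -
      have "d x0 x1 = \<bar>\<alpha> - \<beta>\<bar>" using ruler_dist[OF lr(4)] lr by metis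
      moreover have "d x0 (r ?s) = \<bar>\<alpha> - ?s\<bar>" using ruler_dist[OF lr(4)] lr by metis
      moreover have "d (r ?s) x1 = \<bar>?s - \<beta>\<bar>" using ruler_dist[OF lr(4)] lr by metis
      moreover have "\<bar>\<alpha> - \<beta>\<bar> = \<bar>\<alpha> - ?s\<bar> + \<bar>?s - \<beta>\<bar>"
      proof -
        have "\<alpha> - ?s = (\<alpha> - \<beta>) * t" "?s - \<beta> = (\<alpha> - \<beta>) * (1 - t)" by (simp_all add: algebra_simps)
        moreover have "\<bar>(\<alpha> - \<beta>) * t\<bar> + \<bar>(\<alpha> - \<beta>) * (1 - t)\<bar> = \<bar>\<alpha> - \<beta>\<bar>"
          using t01 by (simp add: abs_mult, simp add: algebra_simps)
        ultimately show ?thesis by simp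
      qed
      ultimately show ?thesis by simp
    qed
    ultimately have "between L d x0 (r ?s) x1"
      unfolding between_def using False lr ruler_in[OF lr(4)] by blast
    then show ?thesis using c t False unfolding segment_def by auto
  qed
qed




lemma vext_d_eq: "vext_d d (x,y) (x',y') = sqrt ((d x x')\<^sup>2 + (y - y')\<^sup>2)"
  unfolding vext_d_def by simp

lemma sqrt_sq_lin:
  assumes "A = (k * R)\<^sup>2" "0 \<le> k" "0 \<le> R" shows "sqrt A = k * R"
  using assms by simp

lemma alg1: "(\<alpha> - ((\<beta> - \<alpha>) * t + \<alpha>))\<^sup>2 + (y0 - ((1 - t) * y0 + t * y1))\<^sup>2
   = (t * sqrt ((\<alpha> - \<beta>)\<^sup>2 + (y0 - y1)\<^sup>2))\<^sup>2" for \<alpha> \<beta> t y0 y1 :: real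
proof -
  have "(t * sqrt ((\<alpha> - \<beta>)\<^sup>2 + (y0 - y1)\<^sup>2))\<^sup>2 = t\<^sup>2 * ((\<alpha> - \<beta>)\<^sup>2 + (y0 - y1)\<^sup>2)"
    by (simp add: power_mult_distrib)
  then show ?thesis by (simp add: power2_eq_square algebra_simps)
qed

lemma alg2: "((\<beta> - \<alpha>) * t + \<alpha> - \<beta>)\<^sup>2 + ((1 - t) * y0 + t * y1 - y1)\<^sup>2
   = ((1 - t) * sqrt ((\<alpha> - \<beta>)\<^sup>2 + (y0 - y1)\<^sup>2))\<^sup>2" for \<alpha> \<beta> t y0 y1 :: real
proof -
  have "((1 - t) * sqrt ((\<alpha> - \<beta>)\<^sup>2 + (y0 - y1)\<^sup>2))\<^sup>2 = (1 - t)\<^sup>2 * ((\<alpha> - \<beta>)\<^sup>2 + (y0 - y1)\<^sup>2)"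
    by (simp add: power_mult_distrib)
  then show ?thesis by (simp add: power2_eq_square algebra_simps)
qed

lemma segB:
  assumes sys: "rBB X L d" and x: "x0 \<in> X" "x1 \<in> X"
    and sp: "std_param L d x0 x1 c" and t: "t \<in> {0..1}"
  shows "(c t, (1-t)*y0 + t*y1) \<in> segment (vext_L X L d) (vext_d d) (x0,y0) (x1,y1)"
proof -
  let ?L = "vext_L X L d" and ?d = "vext_d d"
  let ?p = "(c t, (1-t)*y0 + t*y1)"
  have e: "c 0 = x0" "c 1 = x1" using std_param_ends[OF sp] by auto
  show ?thesis
  proof (cases "(x0,y0) = (x1,y1)")
    case True
    then have "c t = x0" using sp t unfolding std_param_def by auto
    then show ?thesis using True unfolding segment_def by (auto simp: algebra_simps)
  next
    case neq: False
    show ?thesis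
    proof (cases "t = 0 \<or> t = 1")
      case True then show ?thesis using e unfolding segment_def by auto
    next
      case False
      have t01: "0 < t" "t < 1" using t False by auto
      have "between ?L ?d (x0,y0) ?p (x1,y1)"
      proof (cases "x0 = x1")
        case True
        have ct: "c t = x0" using True sp t unfolding std_param_def by auto
        have yne: "y0 \<noteq> y1" using True neq by auto
        have d0: "d x0 x0 = 0" using d_self[OF sys x(1)] .
        have S: "{x0} \<times> UNIV \<in> ?L" unfolding vext_L_def mem_Collect_eq
          apply (rule bexI[of _ x0], rule exI[of _ y0], rule bexI[of _ x0], rule exI[of _ y1])
          using x yne by auto
        have n1: "(1-t)*y0 + t*y1 \<noteq> y0"
        proof
          assume "(1-t)*y0 + t*y1 = y0" then have "t * (y1 - y0) = 0" by (simp add: algebra_simps)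
          then show False using t01 yne by simp
        qed
        have n2: "(1-t)*y0 + t*y1 \<noteq> y1"
        proof
          assume "(1-t)*y0 + t*y1 = y1" then have "(1-t) * (y0 - y1) = 0" by (simp add: algebra_simps)
          then show False using t01 yne by simp
        qed
        have dist: "\<bar>y0 - y1\<bar> = \<bar>y0 - ((1-t)*y0 + t*y1)\<bar> + \<bar>(1-t)*y0 + t*y1 - y1\<bar>"
        proof -
          have "y0 - ((1-t)*y0 + t*y1) = t * (y0 - y1)" "(1-t)*y0 + t*y1 - y1 = (1-t)*(y0-y1)"
            by (simp_all add: algebra_simps)
          moreover have "\<bar>t * (y0 - y1)\<bar> + \<bar>(1-t)*(y0-y1)\<bar> = \<bar>y0 - y1\<bar>"
            using t01 by (simp add: abs_mult, simp add: algebra_simps)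
          ultimately show ?thesis by simp
        qed
        have dd: "?d (x0,y0) (x1,y1) = ?d (x0,y0) ?p + ?d ?p (x1,y1)"
          unfolding vext_d_eq ct using True d0 dist by simp
        have mem: "(x0,y0) \<in> {x0} \<times> UNIV" "?p \<in> {x0} \<times> UNIV" "(x1,y1) \<in> {x0} \<times> UNIV"
          using ct True by auto
        have dis: "(x0,y0) \<noteq> ?p" "?p \<noteq> (x1,y1)" using n1 n2 by auto
        have ex: "\<exists>S\<in>?L. (x0,y0) \<in> S \<and> ?p \<in> S \<and> (x1,y1) \<in> S"
          by (rule bexI[OF _ S]) (intro conjI mem)
        show ?thesis unfolding between_def
          by (intro conjI) (rule dis(1), rule dis(2), rule neq, rule ex, rule dd)
      next
        case False
        then obtain l r \<alpha> \<beta> where lr: "l \<in> L" "x0 \<in> l" "x1 \<in> l" "ruler d l r" "r \<alpha> = x0" "r \<beta> = x1"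
          and c: "\<And>t. t\<in>{0..1} \<Longrightarrow> c t = r ((\<beta> - \<alpha>) * t + \<alpha>)" using sp unfolding std_param_def by blast
        have ab: "\<alpha> \<noteq> \<beta>" using lr False by auto
        define R where "R = sqrt ((\<alpha> - \<beta>)\<^sup>2 + (y0 - y1)\<^sup>2)"
        have Rpos: "R > 0" unfolding R_def using ab by (simp add: add_pos_nonneg)
        define a where "a = 1 / R"
        have aR: "a * R = 1" using Rpos unfolding a_def by simp
        define P where "P = (\<lambda>\<tau>. (r ((1 / sqrt ((\<alpha> - \<beta>)\<^sup>2 + (y0 - y1)\<^sup>2)) * \<tau> * (\<beta> - \<alpha>) + \<alpha>),
                    (1 / sqrt ((\<alpha> - \<beta>)\<^sup>2 + (y0 - y1)\<^sup>2)) * \<tau> * (y1 - y0) + y0))"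
        have Pa: "P \<tau> = (r (a * \<tau> * (\<beta> - \<alpha>) + \<alpha>), a * \<tau> * (y1 - y0) + y0)" for \<tau>
          unfolding P_def a_def R_def by simp
        have S: "range P \<in> ?L" unfolding vext_L_def mem_Collect_eq
          apply (rule bexI[of _ x0], rule exI[of _ y0], rule bexI[of _ x1], rule exI[of _ y1])
            apply (intro conjI disjI1)
          using neq apply simp
          using False apply simp
          apply (rule exI[of _ l], rule exI[of _ r], rule exI[of _ \<alpha>], rule exI[of _ \<beta>])
          using lr x by (simp_all add: P_def)
        have P0: "P 0 = (x0, y0)" using Pa lr by simp
        have P1: "P R = (x1, y1)" using Pa lr aR by simp
        have Pt: "P (t * R) = ?p"
        proof -
          have at: "a * (t * R) = t" using aR by (metis mult.commute mult.left_commute mult_1_right)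
          have e1: "a * (t * R) * (\<beta> - \<alpha>) + \<alpha> = (\<beta> - \<alpha>) * t + \<alpha>" unfolding at by (simp add: mult.commute)
          have e2: "a * (t * R) * (y1 - y0) + y0 = (1-t)*y0 + t*y1" unfolding at by (simp add: algebra_simps)
          show ?thesis unfolding Pa e1 e2 using c[OF t] by simp
        qed
        let ?s = "(\<beta> - \<alpha>) * t + \<alpha>"
        have ct: "c t = r ?s" using c t by simp
        have ne1: "?s \<noteq> \<alpha>" using ab t01 by simp
        have ne2: "?s \<noteq> \<beta>"
        proof
          assume "?s = \<beta>" then have "(\<beta> - \<alpha>) * (1 - t) = 0" by (simp add: algebra_simps)
          then show False using ab t01 by simp
        qed
        have rne: "r ?s \<noteq> x0" "r ?s \<noteq> x1" using ne1 ne2 ruler_inj[OF lr(4)] lr by metis+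
        have d01: "?d (x0,y0) (x1,y1) = 1 * R"
          unfolding vext_d_eq R_def using ruler_dist[OF lr(4), of \<alpha> \<beta>] lr by (simp add: power2_abs)
        have d0p: "?d (x0,y0) ?p = t * R"
        proof -
          have dx: "d x0 (r ?s) = \<bar>\<alpha> - ?s\<bar>" unfolding lr(5)[symmetric] by (rule ruler_dist[OF lr(4)])
          show ?thesis unfolding vext_d_eq ct dx power2_abs alg1 real_sqrt_abs
            using t01 Rpos unfolding R_def by simp
        qed
        have dp1: "?d ?p (x1,y1) = (1 - t) * R"
        proof -
          have dx: "d (r ?s) x1 = \<bar>?s - \<beta>\<bar>" unfolding lr(6)[symmetric] by (rule ruler_dist[OF lr(4)])
          show ?thesis unfolding vext_d_eq ct dx power2_abs alg2 real_sqrt_abs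
            using t01 Rpos unfolding R_def by simp
        qed
        have "?d (x0,y0) (x1,y1) = ?d (x0,y0) ?p + ?d ?p (x1,y1)"
          using d01 d0p dp1 by (simp add: algebra_simps)
        moreover have "(x0,y0) \<in> range P" "(x1,y1) \<in> range P" "?p \<in> range P"
          using P0 P1 Pt by (metis rangeI)+
        ultimately show ?thesis unfolding between_def using S neq rne ct by auto
      qed
      then show ?thesis using neq unfolding segment_def by auto
    qed
  qed
qed




lemma betw_real:
  fixes a b y :: real
  assumes ne: "a \<noteq> b" and e: "\<bar>a - b\<bar> = \<bar>a - y\<bar> + \<bar>y - b\<bar>"
  shows "\<exists>t\<in>{0..1}. y = (1-t)*a + t*b"
proof -
  define t where "t = (y - a) / (b - a)"
  have nz: "b - a \<noteq> 0" using ne by simp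
  have tb: "t*(b-a) = y - a" unfolding t_def using nz by simp
  have "(1-t)*a + t*b = a + t*(b-a)" by (simp add: algebra_simps)
  then have y: "y = (1-t)*a + t*b" using tb by simp
  have "t \<in> {0..1}"
  proof (cases "a < b")
    case True
    then have "a \<le> y" "y \<le> b" using e by (auto simp: abs_if split: if_splits)
    then show ?thesis unfolding t_def using True by (auto simp: divide_simps)
  next
    case False
    then have "b < a" using ne by simp
    then have "b \<le> y" "y \<le> a" using e by (auto simp: abs_if split: if_splits)
    then show ?thesis unfolding t_def using \<open>b < a\<close> by (auto simp: divide_simps)
  qed
  then show ?thesis using y by blast
qed

lemma alg3:
  fixes s0 s1 v0 v1 \<tau> \<tau>' :: real
  assumes Q: "(s0 - s1)\<^sup>2 + (v0 - v1)\<^sup>2 > 0"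
  defines "a \<equiv> 1 / sqrt ((s0 - s1)\<^sup>2 + (v0 - v1)\<^sup>2)"
  shows "sqrt ((\<bar>a * \<tau> * (s1 - s0) + s0 - (a * \<tau>' * (s1 - s0) + s0)\<bar>)\<^sup>2
              + (a * \<tau> * (v1 - v0) + v0 - (a * \<tau>' * (v1 - v0) + v0))\<^sup>2) = \<bar>\<tau> - \<tau>'\<bar>"
proof -
  let ?Q = "(s0 - s1)\<^sup>2 + (v0 - v1)\<^sup>2"
  have sq: "(sqrt ?Q)\<^sup>2 = ?Q" using Q by simp
  have Qne: "?Q \<noteq> 0" using Q by linarith
  have aQ: "a\<^sup>2 * ?Q = 1" unfolding a_def power_divide sq using Qne by simp
  have "(\<bar>a * \<tau> * (s1 - s0) + s0 - (a * \<tau>' * (s1 - s0) + s0)\<bar>)\<^sup>2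
              + (a * \<tau> * (v1 - v0) + v0 - (a * \<tau>' * (v1 - v0) + v0))\<^sup>2
        = (a\<^sup>2 * ?Q) * (\<tau> - \<tau>')\<^sup>2" unfolding power2_abs by (simp add: power2_eq_square algebra_simps)
  then show ?thesis using aQ by simp
qed

lemma segA:
  assumes sys: "rBB X L d" and x: "x0 \<in> X" "x1 \<in> X"
    and p: "p \<in> segment (vext_L X L d) (vext_d d) (x0,y0) (x1,y1)"
  shows "\<exists>c t. std_param L d x0 x1 c \<and> t \<in> {0..1} \<and> p = (c t, (1-t)*y0 + t*y1)"
proof -
  let ?L = "vext_L X L d" and ?d = "vext_d d"
  obtain c0 where sp0: "std_param L d x0 x1 c0" using std_param_ex[OF sys x] by blast
  have e0: "c0 0 = x0" "c0 1 = x1" using std_param_ends[OF sp0] by auto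
  show ?thesis
  proof (cases "p = (x0,y0) \<or> p = (x1,y1)")
    case True
    then show ?thesis
    proof
      assume "p = (x0,y0)" then show ?thesis using sp0 e0 by (intro exI[of _ c0] exI[of _ 0]) auto
    next
      assume "p = (x1,y1)" then show ?thesis using sp0 e0 by (intro exI[of _ c0] exI[of _ 1]) auto
    qed
  next
    case False
    then have neq: "(x0,y0) \<noteq> (x1,y1)" using p unfolding segment_def by auto
    obtain x y where pxy: "p = (x,y)" by fastforce
    have bt: "between ?L ?d (x0,y0) (x,y) (x1,y1)" using p False neq pxy unfolding segment_def by auto
    then obtain S where S: "S \<in> ?L" "(x0,y0) \<in> S" "(x,y) \<in> S" "(x1,y1) \<in> S"
      and de: "?d (x0,y0) (x1,y1) = ?d (x0,y0) (x,y) + ?d (x,y) (x1,y1)"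
      unfolding between_def by blast
    obtain u0 v0 u1 v1 where u: "u0 \<in> X" "u1 \<in> X" "(u0,v0) \<noteq> (u1,v1)"
      and cs: "(u0 \<noteq> u1 \<and> (\<exists>l c s0 s1. l \<in> L \<and> u0 \<in> l \<and> u1 \<in> l \<and> ruler d l c \<and> c s0 = u0 \<and> c s1 = u1 \<and>
         S = (\<lambda>t. (c ((1 / sqrt ((s0 - s1)\<^sup>2 + (v0 - v1)\<^sup>2)) * t * (s1 - s0) + s0),
                    (1 / sqrt ((s0 - s1)\<^sup>2 + (v0 - v1)\<^sup>2)) * t * (v1 - v0) + v0)) ` UNIV))
      \<or> (u0 = u1 \<and> S = {u0} \<times> UNIV)"
      using S(1) unfolding vext_L_def by blast
    from cs show ?thesis
    proof
      assume "u0 = u1 \<and> S = {u0} \<times> UNIV"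
      then have xs: "x0 = u0" "x = u0" "x1 = u0" using S by auto
      have yne: "y0 \<noteq> y1" using neq xs by auto
      have d0: "d u0 u0 = 0" using d_self[OF sys u(1)] .
      have "\<bar>y0 - y1\<bar> = \<bar>y0 - y\<bar> + \<bar>y - y1\<bar>" using de unfolding vext_d_eq xs d0 by simp
      then obtain t where t: "t \<in> {0..1}" "y = (1-t)*y0 + t*y1" using betw_real[OF yne] by blast
      have "c0 t = x0" using sp0 t xs unfolding std_param_def by auto
      then show ?thesis using sp0 t pxy xs by (intro exI[of _ c0] exI[of _ t]) auto
    next
      assume "u0 \<noteq> u1 \<and> (\<exists>l c s0 s1. l \<in> L \<and> u0 \<in> l \<and> u1 \<in> l \<and> ruler d l c \<and> c s0 = u0 \<and> c s1 = u1 \<and>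
         S = (\<lambda>t. (c ((1 / sqrt ((s0 - s1)\<^sup>2 + (v0 - v1)\<^sup>2)) * t * (s1 - s0) + s0),
                    (1 / sqrt ((s0 - s1)\<^sup>2 + (v0 - v1)\<^sup>2)) * t * (v1 - v0) + v0)) ` UNIV)"
      then obtain l r s0 s1 where une: "u0 \<noteq> u1" and lr: "l \<in> L" "ruler d l r" "r s0 = u0" "r s1 = u1"
        and Seq: "S = (\<lambda>t. (r ((1 / sqrt ((s0 - s1)\<^sup>2 + (v0 - v1)\<^sup>2)) * t * (s1 - s0) + s0),
                    (1 / sqrt ((s0 - s1)\<^sup>2 + (v0 - v1)\<^sup>2)) * t * (v1 - v0) + v0)) ` UNIV"
        by blast
      define a where "a = 1 / sqrt ((s0 - s1)\<^sup>2 + (v0 - v1)\<^sup>2)"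
      define \<sigma> where "\<sigma> = (\<lambda>\<tau>. a * \<tau> * (s1 - s0) + s0)"
      define \<nu> where "\<nu> = (\<lambda>\<tau>. a * \<tau> * (v1 - v0) + v0)"
      have Seq': "S = (\<lambda>\<tau>. (r (\<sigma> \<tau>), \<nu> \<tau>)) ` UNIV" unfolding Seq \<sigma>_def \<nu>_def a_def by simp
      have s01: "s0 \<noteq> s1" using une lr by auto
      have Qpos: "(s0 - s1)\<^sup>2 + (v0 - v1)\<^sup>2 > 0" using s01 by (simp add: add_pos_nonneg)
      have dist: "?d (r (\<sigma> \<tau>), \<nu> \<tau>) (r (\<sigma> \<tau>'), \<nu> \<tau>') = \<bar>\<tau> - \<tau>'\<bar>" for \<tau> \<tau>'
        unfolding vext_d_eq ruler_dist[OF lr(2)] \<sigma>_def \<nu>_def a_def using alg3[OF Qpos] by simp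
      obtain \<tau>0 where t0: "(x0,y0) = (r (\<sigma> \<tau>0), \<nu> \<tau>0)" using S(2) Seq' by blast
      obtain \<tau> where tt: "(x,y) = (r (\<sigma> \<tau>), \<nu> \<tau>)" using S(3) Seq' by blast
      obtain \<tau>1 where t1: "(x1,y1) = (r (\<sigma> \<tau>1), \<nu> \<tau>1)" using S(4) Seq' by blast
      have tne: "\<tau>0 \<noteq> \<tau>1" using neq t0 t1 by auto
      have "\<bar>\<tau>0 - \<tau>1\<bar> = \<bar>\<tau>0 - \<tau>\<bar> + \<bar>\<tau> - \<tau>1\<bar>" using de unfolding t0 tt t1 dist .
      then obtain t where t: "t \<in> {0..1}" "\<tau> = (1-t)*\<tau>0 + t*\<tau>1" using betw_real[OF tne] by blast
      have sig: "\<sigma> \<tau> = (1-t) * \<sigma> \<tau>0 + t * \<sigma> \<tau>1" unfolding t(2) \<sigma>_def by (simp add: algebra_simps)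
      have nu: "\<nu> \<tau> = (1-t) * \<nu> \<tau>0 + t * \<nu> \<tau>1" unfolding t(2) \<nu>_def by (simp add: algebra_simps)
      have yy: "y = (1-t)*y0 + t*y1" using nu t0 tt t1 by simp
      show ?thesis
      proof (cases "x0 = x1")
        case True
        then have "\<sigma> \<tau>0 = \<sigma> \<tau>1" using t0 t1 ruler_inj[OF lr(2)] by auto
        then have "\<sigma> \<tau> = \<sigma> \<tau>0" using sig by (simp add: algebra_simps)
        then have "x = x0" using t0 tt by simp
        moreover have "c0 t = x0" using sp0 t True unfolding std_param_def by auto
        ultimately show ?thesis using sp0 t pxy yy by (intro exI[of _ c0] exI[of _ t]) auto
      next
        case False
        define c where "c = (\<lambda>t'. r ((\<sigma> \<tau>1 - \<sigma> \<tau>0) * t' + \<sigma> \<tau>0))"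
        have "\<exists>l r \<alpha> \<beta>. l \<in> L \<and> x0 \<in> l \<and> x1 \<in> l \<and> ruler d l r
          \<and> r \<alpha> = x0 \<and> r \<beta> = x1 \<and> (\<forall>t\<in>{0..1}. c t = r ((\<beta> - \<alpha>) * t + \<alpha>))"
          apply (rule exI[of _ l], rule exI[of _ r], rule exI[of _ "\<sigma> \<tau>0"], rule exI[of _ "\<sigma> \<tau>1"])
          using lr t0 t1 ruler_in[OF lr(2)] by (auto simp: c_def)
        then have sp: "std_param L d x0 x1 c" unfolding std_param_def using False by blast
        have "c t = x" unfolding c_def using tt sig by (simp add: algebra_simps)
        then show ?thesis using sp t pxy yy by (intro exI[of _ c] exI[of _ t]) auto
      qed
    qed
  qed
qed




lemma conv_sub: "H \<subseteq> bb_conv X L d H"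
  unfolding bb_conv_def by blast

lemma conv_min: "bb_convex X L d K \<Longrightarrow> H \<subseteq> K \<Longrightarrow> bb_conv X L d H \<subseteq> K"
  unfolding bb_conv_def by blast

lemma conv_mono: "H \<subseteq> H' \<Longrightarrow> bb_conv X L d H \<subseteq> bb_conv X L d H'"
  unfolding bb_conv_def by blast

lemma conv_convex:
  assumes "bb_convex X L d X" "H \<subseteq> X" shows "bb_convex X L d (bb_conv X L d H)"
proof -
  have sub: "bb_conv X L d H \<subseteq> X" using conv_min assms by blast
  show ?thesis unfolding bb_convex_def
  proof (intro conjI ballI sub)
    fix a b assume ab: "a \<in> bb_conv X L d H" "b \<in> bb_conv X L d H"
    show "segment L d a b \<subseteq> bb_conv X L d H"
      unfolding bb_conv_def
    proof (rule Inter_greatest)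
      fix K assume "K \<in> {K. bb_convex X L d K \<and> H \<subseteq> K}"
      then have K: "bb_convex X L d K" "H \<subseteq> K" by auto
      then have "a \<in> K" "b \<in> K" using ab unfolding bb_conv_def by auto
      then show "segment L d a b \<subseteq> K" using K(1) unfolding bb_convex_def by blast
    qed
  qed
qed

lemma conv_insert:
  assumes "bb_convex X L d X" "B \<subseteq> X" "a \<in> X"
  shows "bb_conv X L d (insert a (bb_conv X L d B)) = bb_conv X L d (insert a B)"
proof
  show "bb_conv X L d (insert a B) \<subseteq> bb_conv X L d (insert a (bb_conv X L d B))"
    by (rule conv_mono) (use conv_sub[of B X L d] in blast)
  have "bb_convex X L d (bb_conv X L d (insert a B))"
    by (rule conv_convex[OF assms(1)]) (use assms in blast)
  moreover have "insert a (bb_conv X L d B) \<subseteq> bb_conv X L d (insert a B)"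
    using conv_sub[of "insert a B"] conv_mono[of B "insert a B"] by blast
  ultimately show "bb_conv X L d (insert a (bb_conv X L d B)) \<subseteq> bb_conv X L d (insert a B)"
    by (rule conv_min)
qed

lemma conv_empty: "bb_conv X L d {} = {}"
proof -
  have "bb_convex X L d {}" unfolding bb_convex_def by simp
  then show ?thesis using conv_min[of X L d "{}" "{}"] by blast
qed

lemma conv_single: assumes "p \<in> X" shows "bb_conv X L d {p} = {p}"
proof -
  have "bb_convex X L d {p}" unfolding bb_convex_def segment_def using assms by simp
  then show ?thesis using conv_min[of X L d "{p}" "{p}"] conv_sub[of "{p}"] by blast
qed

lemma segment_sub:
  assumes sys: "rBB X L d" and "x0 \<in> X" "x1 \<in> X" shows "segment L d x0 x1 \<subseteq> X"
  using assms unfolding segment_def between_def rBB_def by auto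

lemma vext_convex:
  assumes sys: "rBB X L d" and K: "bb_convex X L d K"
  shows "bb_convex (vext_X X) (vext_L X L d) (vext_d d) (K \<times> UNIV)"
  unfolding bb_convex_def
proof (intro conjI ballI subsetI)
  show "p \<in> vext_X X" if "p \<in> K \<times> UNIV" for p using that K unfolding vext_X_def bb_convex_def by auto
  fix a b q assume ab: "a \<in> K \<times> UNIV" "b \<in> K \<times> UNIV" and q: "q \<in> segment (vext_L X L d) (vext_d d) a b"
  obtain x0 y0 x1 y1 where a: "a = (x0,y0)" and b: "b = (x1,y1)" by fastforce
  have x: "x0 \<in> K" "x1 \<in> K" using ab a b by auto
  then have xX: "x0 \<in> X" "x1 \<in> X" using K unfolding bb_convex_def by auto
  obtain c t where ct: "std_param L d x0 x1 c" "t \<in> {0..1}" "q = (c t, (1-t)*y0 + t*y1)"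
    using segA[OF sys xX] q a b by blast
  have "c t \<in> K" using std_param_seg[OF ct(1,2)] x K unfolding bb_convex_def by blast
  then show "q \<in> K \<times> UNIV" using ct by simp
qed

lemma vext_X_convex:
  assumes sys: "rBB X L d" shows "bb_convex (vext_X X) (vext_L X L d) (vext_d d) (vext_X X)"
proof -
  have "bb_convex X L d X" unfolding bb_convex_def using segment_sub[OF sys] by blast
  then show ?thesis using vext_convex[OF sys] unfolding vext_X_def by blast
qed

lemma proj:
  assumes sys: "rBB X L d" and p: "p \<in> bb_conv (vext_X X) (vext_L X L d) (vext_d d) H"
  shows "fst p \<in> bb_conv X L d (fst ` H)"
  unfolding bb_conv_def
proof (rule InterI)
  fix K assume "K \<in> {K. bb_convex X L d K \<and> fst ` H \<subseteq> K}"
  then have K: "bb_convex X L d K" "fst ` H \<subseteq> K" by auto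
  have "H \<subseteq> K \<times> UNIV" using K(2) by force
  then have "p \<in> K \<times> UNIV" using conv_min[OF vext_convex[OF sys K(1)]] p by blast
  then show "fst p \<in> K" by auto
qed




lemma cara_prop_D:
  assumes "cara_prop X L d k" "H \<subseteq> X" "x \<in> bb_conv X L d H"
  shows "\<exists>F. F \<subseteq> H \<and> finite F \<and> card F \<le> k \<and> x \<in> bb_conv X L d F"
  using assms unfolding cara_prop_def by blast

theorem theorem2:
  fixes X :: "'a set" and L :: "'a set set" and d :: "'a \<Rightarrow> 'a \<Rightarrow> real"
    and \<kappa> :: nat and D :: "'a set" and f g :: "'a \<Rightarrow> real"
  assumes sys: "rBB X L d"
    and drop: "drop_complete (vext_X X) (vext_L X L d) (vext_d d)"
    and cara: "caratheodory_number (vext_X X) (vext_L X L d) (vext_d d) \<kappa>"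
    and Dne: "D \<noteq> {}"
    and Dconv: "bb_convex X L d D"
    and hyp: "\<And>n x0 xs x c t. 1 \<le> n \<Longrightarrow> n \<le> \<kappa> \<Longrightarrow> x0 \<in> D \<Longrightarrow> (\<forall>i\<in>{1..n}. xs i \<in> D) \<Longrightarrow>
       x \<in> bb_conv X L d (xs ` {1..n}) \<Longrightarrow> std_param L d x0 x c \<Longrightarrow> t \<in> {0..1} \<Longrightarrow>
       f (c t) \<le> (1 - t) * g x0 + t * f x"
  shows "\<exists>\<phi>. segment_convex L d D \<phi> \<and> (\<forall>x\<in>D. f x \<le> \<phi> x \<and> \<phi> x \<le> g x)"
proof -
  let ?X = "vext_X X" and ?L = "vext_L X L d" and ?d = "vext_d d"
  let ?conv = "bb_conv ?X ?L ?d"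
  have DX: "D \<subseteq> X" using Dconv unfolding bb_convex_def by blast
  have Xc: "bb_convex ?X ?L ?d ?X" using vext_X_convex[OF sys] .
  have cp: "cara_prop ?X ?L ?d \<kappa>" using cara unfolding caratheodory_number_def by blast
  have k1: "1 \<le> \<kappa>"
  proof (rule ccontr)
    assume "\<not> 1 \<le> \<kappa>" then have k0: "\<kappa> = 0" by simp
    obtain x where x: "x \<in> X" using sys unfolding rBB_def by blast
    have pX: "(x, 0::real) \<in> ?X" using x unfolding vext_X_def by simp
    have xc: "(x, 0::real) \<in> ?conv {(x,0)}" using conv_sub[of "{(x,0::real)}" ?X ?L ?d] by blast
    obtain F where F: "F \<subseteq> {(x,0)}" "finite F" "card F \<le> \<kappa>" "(x,0) \<in> ?conv F"
      using cara_prop_D[OF cp _ xc] pX by blast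
    then have "F = {}" using k0 by auto
    then show False using F(4) conv_empty[of ?X ?L ?d] by auto
  qed
  have fg: "f x \<le> g x" if x: "x \<in> D" for x
  proof -
    have sp: "std_param L d x x (\<lambda>_. x)" unfolding std_param_def by simp
    have "x \<in> bb_conv X L d ((\<lambda>_. x) ` {1..1::nat})" using conv_sub[of "{x}" X L d] by auto
    from hyp[OF order_refl k1 x _ this sp, of 0] x show ?thesis by simp
  qed
  define epi where "epi = {p. fst p \<in> D \<and> g (fst p) \<le> snd p}"
  have epiX: "epi \<subseteq> ?X" using DX unfolding epi_def vext_X_def by auto
  have claim: "\<forall>p\<in>?conv F. f (fst p) \<le> snd p" if "finite F" "F \<subseteq> epi" "card F \<le> \<kappa>" for F
    using that
  proof (induction F rule: finite_induct)
    case empty then show ?case using conv_empty[of ?X ?L ?d] by auto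
  next
    case (insert p0 F')
    have F'epi: "F' \<subseteq> epi" using insert.prems by auto
    have cardF: "card F' + 1 \<le> \<kappa>" using insert.prems insert.hyps by simp
    have IH: "\<forall>p\<in>?conv F'. f (fst p) \<le> snd p" using insert.IH F'epi cardF by simp
    obtain x0 y0 where p0: "p0 = (x0,y0)" by fastforce
    have x0D: "x0 \<in> D" and gy0: "g x0 \<le> y0" using insert.prems p0 unfolding epi_def by auto
    have p0X: "p0 \<in> ?X" using insert.prems epiX by auto
    show ?case
    proof (cases "F' = {}")
      case True
      then show ?thesis using conv_single[OF p0X] p0 fg[OF x0D] gy0 by auto
    next
      case False
      let ?K = "?conv F'"
      have F'X: "F' \<subseteq> ?X" using F'epi epiX by auto
      have Kc: "bb_convex ?X ?L ?d ?K" using conv_convex[OF Xc F'X] .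
      have Kne: "?K \<noteq> {}" using False conv_sub[of F' ?X ?L ?d] by blast
      have KX: "?K \<subseteq> ?X" using Kc unfolding bb_convex_def by blast
      have eq: "?conv (insert p0 F') = (\<Union>q\<in>?K. segment ?L ?d p0 q)"
        using conv_insert[OF Xc F'X p0X, symmetric] drop Kc Kne p0X unfolding drop_complete_def by simp
      show ?thesis
      proof
        fix p assume "p \<in> ?conv (insert p0 F')"
        then obtain q where q: "q \<in> ?K" "p \<in> segment ?L ?d p0 q" using eq by blast
        obtain x' y' where q': "q = (x',y')" by fastforce
        have x0X: "x0 \<in> X" using x0D DX by auto
        have x'X: "x' \<in> X" using q q' KX unfolding vext_X_def by auto
        obtain c t where ct: "std_param L d x0 x' c" "t \<in> {0..1}" "p = (c t, (1-t)*y0 + t*y')"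
          using segA[OF sys x0X x'X] q p0 q' by blast
        have fy': "f x' \<le> y'" using IH q q' by auto
        have x'conv: "x' \<in> bb_conv X L d (fst ` F')" using proj[OF sys] q q' by force
        define n where "n = card (fst ` F')"
        obtain h where h: "bij_betw h {1..n} (fst ` F')"
          using ex_bij_betw_nat_finite_1[of "fst ` F'"] insert.hyps unfolding n_def by blast
        have himg: "h ` {1..n} = fst ` F'" using h unfolding bij_betw_def by blast
        have n1: "1 \<le> n" unfolding n_def using False insert.hyps
          by (simp add: Suc_le_eq card_gt_0_iff)
        have nk: "n \<le> \<kappa>" unfolding n_def using card_image_le[OF insert.hyps(1), of fst] cardF by simp
        have hD: "\<forall>i\<in>{1..n}. h i \<in> D"
        proof
          fix i assume "i \<in> {1..n}" then have "h i \<in> fst ` F'" using himg by blast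
          then obtain p where "p \<in> F'" "h i = fst p" by blast
          then show "h i \<in> D" using F'epi unfolding epi_def by auto
        qed
        have "f (c t) \<le> (1 - t) * g x0 + t * f x'"
          using hyp[OF n1 nk x0D hD _ ct(1) ct(2)] x'conv himg by simp
        also have "\<dots> \<le> (1 - t) * y0 + t * y'"
          using ct(2) gy0 fy' by (intro add_mono mult_left_mono) auto
        finally show "f (fst p) \<le> snd p" using ct(3) by simp
      qed
    qed
  qed
  define C where "C = ?conv epi"
  have lowC: "f (fst p) \<le> snd p" if "p \<in> C" for p
  proof -
    have pc: "p \<in> ?conv epi" using that unfolding C_def .
    obtain F where F: "F \<subseteq> epi" "finite F" "card F \<le> \<kappa>" "p \<in> ?conv F"
      using cara_prop_D[OF cp epiX pc] by blast
    show ?thesis using claim[OF F(2,1,3)] F(4) by auto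
  qed
  have Cc: "bb_convex ?X ?L ?d C" unfolding C_def using conv_convex[OF Xc epiX] .
  define Y where "Y = (\<lambda>x. {y. (x,y) \<in> C})"
  have bdd: "bdd_below (Y x)" for x unfolding Y_def
    by (rule bdd_belowI[of _ "f x"]) (use lowC in force)
  have gY: "g x \<in> Y x" if "x \<in> D" for x
  proof -
    have "(x, g x) \<in> epi" using that unfolding epi_def by simp
    then show ?thesis using conv_sub[of epi ?X ?L ?d] unfolding Y_def C_def by auto
  qed
  have Yne: "Y x \<noteq> {}" "g x \<in> Y x" if "x \<in> D" for x using gY[OF that] by auto
  define \<phi> where "\<phi> = (\<lambda>x. Inf (Y x))"
  have fphi: "f x \<le> \<phi> x" if "x \<in> D" for x
    unfolding \<phi>_def using Yne[OF that] lowC unfolding Y_def by (intro cInf_greatest) force+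
  have phig: "\<phi> x \<le> g x" if "x \<in> D" for x
    unfolding \<phi>_def using Yne[OF that] bdd by (intro cInf_lower) auto
  have sc: "segment_convex L d D \<phi>" unfolding segment_convex_def
  proof (intro ballI allI impI)
    fix x0 x1 c and t :: real assume x: "x0 \<in> D" "x1 \<in> D" and sp: "std_param L d x0 x1 c" and t: "t \<in> {0..1}"
    have xX: "x0 \<in> X" "x1 \<in> X" using x DX by auto
    have key: "\<phi> (c t) \<le> (1-t)*y0 + t*y1" if "y0 \<in> Y x0" "y1 \<in> Y x1" for y0 y1
    proof -
      have "(x0,y0) \<in> C" "(x1,y1) \<in> C" using that unfolding Y_def by auto
      then have "segment ?L ?d (x0,y0) (x1,y1) \<subseteq> C" using Cc unfolding bb_convex_def by blast
      then have "(c t, (1-t)*y0 + t*y1) \<in> C" using segB[OF sys xX sp t] by blast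
      then have "(1-t)*y0 + t*y1 \<in> Y (c t)" unfolding Y_def by simp
      then show ?thesis unfolding \<phi>_def using bdd by (intro cInf_lower) auto
    qed
    show "\<phi> (c t) \<le> (1 - t) * \<phi> x0 + t * \<phi> x1"
    proof (rule field_le_epsilon)
      fix e :: real assume e: "0 < e"
      obtain y0 where y0: "y0 \<in> Y x0" "y0 < \<phi> x0 + e"
        using cInf_lessD[OF Yne(1)[OF x(1)], of "\<phi> x0 + e"] e unfolding \<phi>_def by auto
      obtain y1 where y1: "y1 \<in> Y x1" "y1 < \<phi> x1 + e"
        using cInf_lessD[OF Yne(1)[OF x(2)], of "\<phi> x1 + e"] e unfolding \<phi>_def by auto
      have "\<phi> (c t) \<le> (1-t)*y0 + t*y1" using key y0 y1 by blast
      also have "\<dots> \<le> (1-t)*(\<phi> x0 + e) + t*(\<phi> x1 + e)"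
        using t y0 y1 by (intro add_mono mult_left_mono) auto
      also have "\<dots> = (1 - t) * \<phi> x0 + t * \<phi> x1 + e" by (simp add: algebra_simps)
      finally show "\<phi> (c t) \<le> (1 - t) * \<phi> x0 + t * \<phi> x1 + e" .
    qed
  qed
  show ?thesis using sc fphi phig by blast
qed


end
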